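(* Let $n\ge 2$ and let $\Omega$ be an open proper subset of $\mathbb{R}^n$ having the outer regularity property with constant $b>0$. Let $\kappa\in[0,1)$. Then there is a constant $c=c(n,b,\kappa)$ such that for every $u\in C^1_0(\Omega)$, \[ |u(x)|\le c\,\operatorname{dist}(x,\partial\Omega)^{1-\kappa}\,M_\kappa|\nabla u|(x)\quad\text{for all }x\in\Omega . \]
   Context: An open proper subset $\Omega\subset\mathbb{R}^n$ has the outer regularity property with constant $b>0$ if $|B(y,r)\setminus\Omega|\ge b|B(y,r)|$ for every $y\in\partial\Omega$ and every $r>0$ ($|\cdot|$ is Lebesgue measure). For $\kappa\in[0,n)$ and $f\in L^1_{loc}(\mathbb{R}^n)$, the fractional centred maximal function is $M_\kappa f(x)=\sup_{r>0} r^{\kappa-n}\int_{B(x,r)}|f(y)|\,dy$; a function defined only on $\Omega$ is extended by $0$ outside $\Omega$. $C^1_0(\Omega)$ denotes continuously differentiable functions with compact support in $\Omega$. *)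

theory Defs
  imports "HOL-Analysis.Analysis"
begin

definition outer_regular :: "real \<Rightarrow> ('a::euclidean_space) set \<Rightarrow> bool" where
  "outer_regular b \<Omega> \<longleftrightarrow>
     (\<forall>y\<in>frontier \<Omega>. \<forall>r>0.
        measure lebesgue (ball y r - \<Omega>) \<ge> b * measure lebesgue (ball y r))"

definition frac_max :: "real \<Rightarrow> (('a::euclidean_space) \<Rightarrow> real) \<Rightarrow> 'a \<Rightarrow> ennreal" where
  "frac_max \<kappa> f x =
     (SUP r\<in>{0<..}. ennreal (r powr (\<kappa> - real DIM('a))) *
        (\<integral>\<^sup>+ y\<in>ball x r. ennreal \<bar>f y\<bar> \<partial>lebesgue))"

end

theory Submission
  imports Defs
begin


lemma ftc_bound:
  fixes u :: "'a::euclidean_space \<Rightarrow> real" and g :: "'a \<Rightarrow> 'a"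
  assumes der: "\<And>x. (u has_derivative (\<lambda>h. g x \<bullet> h)) (at x)" and cg: "continuous_on UNIV g"
  shows "ennreal \<bar>u z - u x\<bar> \<le> (\<integral>\<^sup>+ s. indicator {0..1} s * ennreal (norm (g (x + s *\<^sub>R (z - x))) * norm (z - x)) \<partial>lborel)"
proof -
  define p where "p s = u (x + s *\<^sub>R (z - x))" for s :: real
  define p' where "p' s = g (x + s *\<^sub>R (z - x)) \<bullet> (z - x)" for s :: real
  have "(p has_vector_derivative p' s) (at s within {0..1})" for s
  proof -
    have "((\<lambda>s. x + s *\<^sub>R (z - x)) has_derivative (\<lambda>h. h *\<^sub>R (z - x))) (at s)"
      by (auto intro!: derivative_eq_intros)
    from has_derivative_compose[OF this der]
    have "(p has_derivative (\<lambda>h. g (x + s *\<^sub>R (z - x)) \<bullet> (h *\<^sub>R (z - x)))) (at s)"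
      unfolding p_def o_def by simp
    then show ?thesis unfolding has_vector_derivative_def p'_def
      by (auto intro: has_derivative_at_withinI simp: algebra_simps)
  qed
  then have int: "(p' has_integral (p 1 - p 0)) {0..1}"
    by (intro fundamental_theorem_of_calculus) auto
  have cont: "continuous_on {0..1} (\<lambda>s. norm (g (x + s *\<^sub>R (z - x))) * norm (z - x))"
    by (intro continuous_intros continuous_on_compose2[OF cg]) auto
  have le0: "norm (integral {0..1} p') \<le> integral {0..1} (\<lambda>s. norm (g (x + s *\<^sub>R (z - x))) * norm (z - x))"
    using int cont
    by (intro integral_norm_bound_integral) (auto simp: p'_def integrable_continuous_interval Cauchy_Schwarz_ineq2)
  have "integral {0..1} p' = u z - u x" using integral_unique[OF int] by (simp add: p_def)
  with le0 have le: "\<bar>u z - u x\<bar> \<le> integral {0..1} (\<lambda>s. norm (g (x + s *\<^sub>R (z - x))) * norm (z - x))"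
    by simp
  define F where "F s = norm (g (x + s *\<^sub>R (z - x))) * norm (z - x)" for s :: real
  have "(\<integral>\<^sup>+ s. ennreal (indicator {0..1} s * F s) \<partial>lborel) = ennreal (integral {0..1} F)"
  proof (rule nn_integral_has_integral_lebesgue)
    show "(F has_integral integral {0..1} F) {0..1}"
      using cont unfolding F_def[symmetric] by (intro integrable_integral integrable_continuous_interval)
  qed (simp add: F_def)
  moreover have "(\<integral>\<^sup>+ s. ennreal (indicator {0..1} s * F s) \<partial>lborel) = 
     (\<integral>\<^sup>+ s. indicator {0..1} s * ennreal (norm (g (x + s *\<^sub>R (z - x))) * norm (z - x)) \<partial>lborel)"
    by (intro nn_integral_cong) (auto simp: F_def split: split_indicator)
  ultimately have "(\<integral>\<^sup>+ s. indicator {0..1} s * ennreal (norm (g (x + s *\<^sub>R (z - x))) * norm (z - x)) \<partial>lborel)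
     = ennreal (integral {0..1} (\<lambda>s. norm (g (x + s *\<^sub>R (z - x))) * norm (z - x)))" by (simp only: F_def[abs_def])
  with le show ?thesis by (simp add: ennreal_leI)
qed



lemma scale_nn:
  fixes x :: "'a::euclidean_space" and h :: "'a \<Rightarrow> ennreal"
  assumes s: "s > 0" and h: "h \<in> borel_measurable borel"
  shows "(\<integral>\<^sup>+ z. h (x + s *\<^sub>R (z - x)) \<partial>lborel) = ennreal (1 / s ^ DIM('a)) * (\<integral>\<^sup>+ w. h w \<partial>lborel)"
proof -
  define T where "T z = (1 - s) *\<^sub>R x + s *\<^sub>R z" for z :: 'a
  have T: "T z = x + s *\<^sub>R (z - x)" for z by (simp add: T_def algebra_simps)
  have Tm: "T \<in> borel_measurable borel" unfolding T_def by measurable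
  have [measurable]: "h \<in> borel_measurable borel" by (rule h)
  have hT: "(\<lambda>z. h (x + s *\<^sub>R (z - x))) \<in> borel_measurable borel" by measurable
  have "(\<integral>\<^sup>+ w. h w \<partial>lborel) = (\<integral>\<^sup>+ w. h w \<partial>density (distr lborel borel T) (\<lambda>_. \<bar>s\<bar>^DIM('a)))"
    using lborel_affine[of s "(1 - s) *\<^sub>R x"] s unfolding T_def by simp
  also have "\<dots> = (\<integral>\<^sup>+ w. ennreal (\<bar>s\<bar>^DIM('a)) * h w \<partial>distr lborel borel T)"
    using h Tm by (subst nn_integral_density) auto
  also have "\<dots> = (\<integral>\<^sup>+ z. ennreal (\<bar>s\<bar>^DIM('a)) * h (T z) \<partial>lborel)"
    using h Tm by (subst nn_integral_distr) auto
  also have "\<dots> = ennreal (s^DIM('a)) * (\<integral>\<^sup>+ z. h (x + s *\<^sub>R (z - x)) \<partial>lborel)"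
    using s T hT by (subst nn_integral_cmult) (auto simp: T)
  finally have eq: "(\<integral>\<^sup>+ w. h w \<partial>lborel) = ennreal (s^DIM('a)) * (\<integral>\<^sup>+ z. h (x + s *\<^sub>R (z - x)) \<partial>lborel)" .
  have "ennreal (1 / s ^ DIM('a)) * ennreal (s^DIM('a)) = 1"
    using s by (simp add: ennreal_mult'[symmetric])
  then show ?thesis unfolding eq by (simp add: mult.assoc[symmetric])
qed



lemma ind_fst:
  fixes A :: "'a::euclidean_space set"
  assumes "A \<in> sets borel"
  shows "(\<lambda>p. indicator A (fst p) :: ennreal) \<in> borel_measurable (lborel \<Otimes>\<^sub>M (N::'b measure))"
  by (rule measurable_compose[OF measurable_fst]) (simp add: borel_measurable_indicator assms)
lemma ind_snd:
  fixes A :: "'a::euclidean_space set"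
  assumes "A \<in> sets borel"
  shows "(\<lambda>p. indicator A (snd p) :: ennreal) \<in> borel_measurable ((N::'b measure) \<Otimes>\<^sub>M lborel)"
  by (rule measurable_compose[OF measurable_snd]) (simp add: borel_measurable_indicator assms)
lemma frac_max_ball:
  fixes g :: "'a::euclidean_space \<Rightarrow> 'a"
  assumes r: "r > 0"
  shows "(\<integral>\<^sup>+ w. indicator (ball x r) w * ennreal (norm (g w)) \<partial>lborel)
         \<le> ennreal (r powr (real DIM('a) - \<kappa>)) * frac_max \<kappa> (\<lambda>y. norm (g y)) x"
proof -
  define I where "I = (\<integral>\<^sup>+ w. indicator (ball x r) w * ennreal (norm (g w)) \<partial>lborel)"
  have "I = (\<integral>\<^sup>+ y\<in>ball x r. ennreal \<bar>norm (g y)\<bar> \<partial>lebesgue)"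
    unfolding I_def nn_integral_completion by (intro nn_integral_cong) (simp add: mult.commute)
  then have "ennreal (r powr (\<kappa> - real DIM('a))) * I \<le> frac_max \<kappa> (\<lambda>y. norm (g y)) x"
    unfolding frac_max_def using r by (intro SUP_upper2[of r]) auto
  then have "ennreal (r powr (real DIM('a) - \<kappa>)) * (ennreal (r powr (\<kappa> - real DIM('a))) * I)
     \<le> ennreal (r powr (real DIM('a) - \<kappa>)) * frac_max \<kappa> (\<lambda>y. norm (g y)) x"
    by (rule mult_left_mono) simp
  moreover have "ennreal (r powr (real DIM('a) - \<kappa>)) * ennreal (r powr (\<kappa> - real DIM('a))) = 1"
    using r by (simp add: ennreal_mult'[symmetric] powr_add[symmetric])
  ultimately show ?thesis unfolding I_def[symmetric] by (simp add: mult.assoc[symmetric])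
qed

lemma powr_nn:
  assumes "0 \<le> \<kappa>" "\<kappa> < 1"
  shows "(\<integral>\<^sup>+ s. indicator {0..1} s * ennreal (s powr (-\<kappa>)) \<partial>lborel) = ennreal (1 / (1 - \<kappa>))"
proof -
  have "((\<lambda>s. s powr (-\<kappa>)) has_integral (1 powr (-\<kappa>+1) / (-\<kappa>+1))) {0..1::real}"
    using assms by (intro has_integral_powr_from_0) auto
  then have "(\<integral>\<^sup>+ s. ennreal (indicator {0..1} s * s powr (-\<kappa>)) \<partial>lborel) = ennreal (1 / (1 - \<kappa>))"
    by (subst nn_integral_has_integral_lebesgue) auto
  moreover have "(\<integral>\<^sup>+ s. ennreal (indicator {0..1} s * s powr (-\<kappa>)) \<partial>lborel)
      = (\<integral>\<^sup>+ s. indicator {0..1} s * ennreal (s powr (-\<kappa>)) \<partial>lborel)"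
    by (intro nn_integral_cong) (auto split: split_indicator)
  ultimately show ?thesis by simp
qed



theorem proposition3p2:
  fixes b \<kappa> :: real
  assumes "DIM('a::euclidean_space) \<ge> 2"
    and "b > 0"
    and "0 \<le> \<kappa>" and "\<kappa> < 1"
  shows "\<exists>c>0. \<forall>(\<Omega>::'a set) (u::'a \<Rightarrow> real) (g::'a \<Rightarrow> 'a).
           open \<Omega> \<and> \<Omega> \<noteq> UNIV \<and> outer_regular b \<Omega>
           \<and> (\<forall>x. (u has_derivative (\<lambda>h. g x \<bullet> h)) (at x)) \<and> continuous_on UNIV g
           \<and> compact (closure {x. u x \<noteq> 0}) \<and> closure {x. u x \<noteq> 0} \<subseteq> \<Omega>
           \<longrightarrow> (\<forall>x\<in>\<Omega>. ennreal \<bar>u x\<bar>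
                  \<le> ennreal (c * infdist x (frontier \<Omega>) powr (1 - \<kappa>))
                     * frac_max \<kappa> (\<lambda>y. norm (g y)) x)"
proof -
  define n where "n = real DIM('a)"
  define V where "V = measure lborel (ball (0::'a) 1)"
  have V: "V > 0" unfolding V_def by (rule content_ball_pos) simp
  define c where "c = 2 powr (n + 1 - \<kappa>) / ((1 - \<kappa>) * b * V)"
  have c: "c > 0" unfolding c_def using assms V by (intro divide_pos_pos mult_pos_pos) auto
  show ?thesis
  proof (intro exI[of _ c] conjI c allI impI ballI, elim conjE)
    fix \<Omega> :: "'a set" and u :: "'a \<Rightarrow> real" and g :: "'a \<Rightarrow> 'a" and x
    assume op: "open \<Omega>" and nU: "\<Omega> \<noteq> UNIV" and reg: "outer_regular b \<Omega>"
      and der: "\<forall>x. (u has_derivative (\<lambda>h. g x \<bullet> h)) (at x)" and cg: "continuous_on UNIV g"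
      and supp: "closure {x. u x \<noteq> 0} \<subseteq> \<Omega>" and xO: "x \<in> \<Omega>"
    define M where "M = frac_max \<kappa> (\<lambda>y. norm (g y)) x"
    define d where "d = infdist x (frontier \<Omega>)"
    have Fne: "frontier \<Omega> \<noteq> {}" using frontier_eq_empty[of \<Omega>] xO nU by auto
    have xF: "x \<notin> frontier \<Omega>" using xO op by (simp add: frontier_def interior_open)
    have d: "d > 0" unfolding d_def using Fne xF by (intro infdist_pos_not_in_closed) auto
    obtain y where yF: "y \<in> frontier \<Omega>" and dy: "d = dist x y"
      using infdist_attains_inf[OF frontier_closed Fne, of x] unfolding d_def by blast
    define E where "E = ball y d - \<Omega>"
    have Esets: "E \<in> sets lborel" unfolding E_def using op by auto
    have Eball: "E \<subseteq> ball x (2 * d)" unfolding E_def using dy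
      by (auto simp: dist_commute) (smt (verit) dist_commute dist_triangle)
    have u0: "u z = 0" if "z \<in> E" for z
    proof (rule ccontr)
      assume "u z \<noteq> 0"
      then have "z \<in> closure {x. u x \<noteq> 0}" using closure_subset[of "{x. u x \<noteq> 0}"] by auto
      with supp have "z \<in> \<Omega>" by (rule subsetD)
      with that show False unfolding E_def by simp
    qed
    define m where "m = measure lborel E"
    have r0: "measure lebesgue (ball y d - \<Omega>) \<ge> b * measure lebesgue (ball y d)"
      using reg[unfolded outer_regular_def, rule_format, OF yF d] .
    have "measure lebesgue (ball y d - \<Omega>) = m" unfolding m_def E_def
      using Esets unfolding E_def by (rule measure_completion)
    moreover have "measure lebesgue (ball y d) = measure lborel (ball y d)"
      by (rule measure_completion) simp
    ultimately have "b * measure lborel (ball y d) \<le> m" using r0 by simp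
    moreover have "measure lborel (ball y d) = d ^ DIM('a) * V"
      unfolding V_def using d content_ball_conv_unit_ball[of d y] by simp
    ultimately have m: "b * (d ^ DIM('a) * V) \<le> m" by simp
    have mpos: "m > 0" using m assms d V by (smt (verit) mult_pos_pos zero_less_power)
    have Efin: "emeasure lborel E = ennreal m" unfolding m_def
    proof (rule emeasure_eq_ennreal_measure)
      have "emeasure lborel E \<le> emeasure lborel (ball x (2 * d))"
        using Eball by (intro emeasure_mono) auto
      then show "emeasure lborel E \<noteq> top"
        using emeasure_lborel_ball_finite[of x "2*d"] by (auto simp: top_unique)
    qed
    define G where "G = (\<lambda>(z::'a, s::real). indicator (ball x (2 * d)) z * indicator {0..1} s
         * ennreal (2 * d) * ennreal (norm (g (x + s *\<^sub>R (z - x)))))"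
    have [measurable]: "g \<in> borel_measurable borel" using cg by (rule borel_measurable_continuous_onI)
    have Gm: "G \<in> borel_measurable (lborel \<Otimes>\<^sub>M lborel)"
      unfolding G_def case_prod_beta
      by (intro borel_measurable_times_ennreal measurable_const ind_fst[OF borel_open[OF open_ball]] ind_snd[OF borel_closed[OF closed_atLeastAtMost]]) measurable
    have "ennreal \<bar>u x\<bar> * ennreal m = (\<integral>\<^sup>+ z. ennreal \<bar>u x\<bar> * indicator E z \<partial>lborel)"
      using Esets Efin by (simp add: nn_integral_cmult_indicator)
    also have "\<dots> \<le> (\<integral>\<^sup>+ z. (\<integral>\<^sup>+ s. G (z, s) \<partial>lborel) \<partial>lborel)"
    proof (intro nn_integral_mono)
      fix z
      show "ennreal \<bar>u x\<bar> * indicator E z \<le> (\<integral>\<^sup>+ s. G (z, s) \<partial>lborel)"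
      proof (cases "z \<in> E")
        case True
        then have zb: "norm (z - x) \<le> 2 * d" using Eball by (auto simp: dist_norm norm_minus_commute)
        have "ennreal \<bar>u x\<bar> = ennreal \<bar>u z - u x\<bar>" using u0[OF True] by simp
        also have "\<dots> \<le> (\<integral>\<^sup>+ s. indicator {0..1} s * ennreal (norm (g (x + s *\<^sub>R (z - x))) * norm (z - x)) \<partial>lborel)"
          using der cg by (intro ftc_bound) auto
        also have "\<dots> \<le> (\<integral>\<^sup>+ s. G (z, s) \<partial>lborel)"
        proof (intro nn_integral_mono)
          fix s :: real
          have "ennreal (norm (g (x + s *\<^sub>R (z - x))) * norm (z - x)) \<le> ennreal (norm (g (x + s *\<^sub>R (z - x))) * (2 * d))"
            using zb by (intro ennreal_leI mult_left_mono) auto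
          also have "\<dots> = ennreal (2 * d) * ennreal (norm (g (x + s *\<^sub>R (z - x))))"
            using d by (simp add: ennreal_mult'[symmetric] mult.commute)
          finally have le: "ennreal (norm (g (x + s *\<^sub>R (z - x))) * norm (z - x)) \<le> ennreal (2 * d) * ennreal (norm (g (x + s *\<^sub>R (z - x))))" .
          have zB: "z \<in> ball x (2 * d)" using True Eball by blast
          show "indicator {0..1} s * ennreal (norm (g (x + s *\<^sub>R (z - x))) * norm (z - x)) \<le> G (z, s)"
            using le zB by (auto simp: G_def mult.assoc split: split_indicator)
        qed
        finally show ?thesis using True by simp
      qed simp
    qed
    also have "\<dots> = (\<integral>\<^sup>+ s. (\<integral>\<^sup>+ z. G (z, s) \<partial>lborel) \<partial>lborel)"
    proof -
      have ps: "pair_sigma_finite (lborel :: 'a measure) (lborel :: real measure)"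
        by (intro pair_sigma_finite.intro sigma_finite_lborel)
      have Gm': "(\<lambda>(z, s). G (z, s)) \<in> borel_measurable (lborel \<Otimes>\<^sub>M lborel)" using Gm by simp
      show ?thesis using pair_sigma_finite.Fubini'[OF ps Gm'] by simp
    qed
    also have "\<dots> \<le> (\<integral>\<^sup>+ s. ennreal ((2 * d) powr (n + 1 - \<kappa>)) * M * (indicator {0..1} s * ennreal (s powr (-\<kappa>))) \<partial>lborel)"
    proof (intro nn_integral_mono_AE, rule AE_mp[OF AE_lborel_singleton[of 0]], intro AE_I2 impI)
      fix s :: real assume s0: "s \<noteq> 0"
      show "(\<integral>\<^sup>+ z. G (z, s) \<partial>lborel) \<le> ennreal ((2 * d) powr (n + 1 - \<kappa>)) * M * (indicator {0..1} s * ennreal (s powr (-\<kappa>)))"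
      proof (cases "s \<in> {0..1}")
        case False then show ?thesis by (simp add: G_def)
      next
        case True
        with s0 have s: "s > 0" by auto
        define h where "h w = indicator (ball x (2 * d * s)) w * ennreal (norm (g w))" for w
        have gb: "g \<in> borel_measurable borel" using cg by (rule borel_measurable_continuous_onI)
        have [measurable]: "h \<in> borel_measurable borel" unfolding h_def
          by (intro borel_measurable_times_ennreal borel_measurable_indicator measurable_compose[OF gb]) auto
        have hz: "G (z, s) = ennreal (2 * d) * h (x + s *\<^sub>R (z - x))" for z
          using True s d by (auto simp: G_def h_def dist_norm norm_minus_commute split: split_indicator)
        have "(\<integral>\<^sup>+ z. G (z, s) \<partial>lborel) = ennreal (2 * d) * (\<integral>\<^sup>+ z. h (x + s *\<^sub>R (z - x)) \<partial>lborel)"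
          unfolding hz by (intro nn_integral_cmult) measurable
        also have "\<dots> = ennreal (2 * d) * (ennreal (1 / s ^ DIM('a)) * (\<integral>\<^sup>+ w. h w \<partial>lborel))"
          using s by (subst scale_nn) auto
        also have "\<dots> \<le> ennreal (2 * d) * (ennreal (1 / s ^ DIM('a)) * (ennreal ((2 * d * s) powr (n - \<kappa>)) * M))"
          unfolding h_def M_def n_def using s d
          by (intro mult_left_mono frac_max_ball) auto
        also have "\<dots> = ennreal (2 * d * (1 / s ^ DIM('a)) * (2 * d * s) powr (n - \<kappa>)) * M"
        proof -
          have e1: "ennreal (2 * d) * ennreal (1 / s ^ DIM('a)) = ennreal (2 * d * (1 / s ^ DIM('a)))"
            using d by (intro ennreal_mult'[symmetric]) simp
          have e2: "ennreal (2 * d * (1 / s ^ DIM('a))) * ennreal ((2 * d * s) powr (n - \<kappa>)) = ennreal (2 * d * (1 / s ^ DIM('a)) * (2 * d * s) powr (n - \<kappa>))"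
            using d s by (intro ennreal_mult'[symmetric]) simp
          show ?thesis by (simp only: mult.assoc[symmetric] e1 e2)
        qed
        also have "2 * d * (1 / s ^ DIM('a)) * (2 * d * s) powr (n - \<kappa>) = (2 * d) powr (n + 1 - \<kappa>) * s powr (-\<kappa>)"
        proof -
          have "s ^ DIM('a) = s powr n" using s by (simp add: n_def powr_realpow)
          moreover have "(2 * d * s) powr (n - \<kappa>) = (2 * d) powr (n - \<kappa>) * s powr (n - \<kappa>)"
            using s d by (simp add: powr_mult)
          moreover have "(2 * d) powr (n + 1 - \<kappa>) = (2 * d) * (2 * d) powr (n - \<kappa>)"
          proof -
            have "(2 * d) powr (1 + (n - \<kappa>)) = (2 * d) powr 1 * (2 * d) powr (n - \<kappa>)" by (rule powr_add)
            then show ?thesis using d by (simp add: add_diff_eq add.commute)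
          qed
          moreover have "s powr (n - \<kappa>) = s powr (-\<kappa>) * s powr n"
            using s by (simp add: powr_add[symmetric])
          moreover have "s powr n > 0" using s by simp
          ultimately show ?thesis by (simp add: field_simps)
        qed
        finally show ?thesis using True s d
          by (simp add: ennreal_mult'[symmetric] mult_ac)
      qed
    qed
    also have "\<dots> = ennreal ((2 * d) powr (n + 1 - \<kappa>)) * M * ennreal (1 / (1 - \<kappa>))"
      using assms by (subst nn_integral_cmult) (auto simp: powr_nn)
    finally have main: "ennreal \<bar>u x\<bar> * ennreal m \<le> ennreal ((2 * d) powr (n + 1 - \<kappa>) / (1 - \<kappa>)) * M"
      using assms d by (simp add: ennreal_mult'[symmetric] mult_ac)
    have "ennreal \<bar>u x\<bar> = ennreal \<bar>u x\<bar> * ennreal m * ennreal (1 / m)"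
      using mpos by (simp add: ennreal_mult'[symmetric] mult.assoc)
    also have "\<dots> \<le> ennreal ((2 * d) powr (n + 1 - \<kappa>) / (1 - \<kappa>)) * M * ennreal (1 / m)"
      by (rule mult_right_mono[OF main]) simp
    also have "\<dots> = ennreal ((2 * d) powr (n + 1 - \<kappa>) / (1 - \<kappa>) / m) * M"
      using mpos assms by (simp add: ennreal_mult'[symmetric] mult_ac)
    also have "\<dots> \<le> ennreal (c * d powr (1 - \<kappa>)) * M"
    proof (intro mult_right_mono ennreal_leI)
      have bd: "0 < b * (d ^ DIM('a) * V)" using assms d V by simp
      have "(2 * d) powr (n + 1 - \<kappa>) / (1 - \<kappa>) / m \<le> (2 * d) powr (n + 1 - \<kappa>) / (1 - \<kappa>) / (b * (d ^ DIM('a) * V))"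
        using m bd assms by (intro divide_left_mono) auto
      also have "\<dots> = c * d powr (1 - \<kappa>)"
      proof -
        have "d ^ DIM('a) = d powr n" using d by (simp add: n_def powr_realpow)
        moreover have "(2 * d) powr (n + 1 - \<kappa>) = 2 powr (n + 1 - \<kappa>) * d powr (n + 1 - \<kappa>)"
          using d by (simp add: powr_mult)
        moreover have "d powr (n + 1 - \<kappa>) = d powr n * d powr (1 - \<kappa>)"
          using d by (simp add: powr_add[symmetric] add_diff_eq)
        ultimately show ?thesis using d V assms
          by (simp add: c_def field_simps)
      qed
      finally show "(2 * d) powr (n + 1 - \<kappa>) / (1 - \<kappa>) / m \<le> c * d powr (1 - \<kappa>)" .
    qed simp
    finally show "ennreal \<bar>u x\<bar> \<le> ennreal (c * infdist x (frontier \<Omega>) powr (1 - \<kappa>)) * frac_max \<kappa> (\<lambda>y. norm (g y)) x"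
      unfolding M_def d_def .
  qed
qed

end
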